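(* Let $n\ge 4$ be an even integer and $k\ge 3$ an integer. Then $\psi(C_n\square P_k)=4$.
   Context: All graphs are finite and connected; $d(u,v)$ is the shortest-path distance. $C_n$ is the cycle on $n$ vertices and $P_k$ the path on $k$ vertices. The cartesian product $G\square H$ has vertex set $V(G)\times V(H)$, with $(g_1,h_1)$ adjacent to $(g_2,h_2)$ iff either $h_1=h_2$ and $g_1g_2\in E(G)$, or $g_1=g_2$ and $h_1h_2\in E(H)$. For an ordered set $Q=\{q_1,\dots,q_l\}$ of vertices, $r(x|Q)=(d(x,q_1),\dots,d(x,q_l))$. $Q$ is a doubly resolving set of $G$ if for any two distinct vertices $x,y$ of $G$, $r(x|Q)-r(y|Q)\neq\lambda(1,\dots,1)$ for every integer $\lambda$. $\psi(G)$ denotes the minimum size of a doubly resolving set of $G$. *)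

theory Defs
  imports Main
begin

definition gdist :: "'a set \<Rightarrow> ('a \<Rightarrow> 'a \<Rightarrow> bool) \<Rightarrow> 'a \<Rightarrow> 'a \<Rightarrow> nat" where
  "gdist V E u v = (LEAST m. \<exists>p. length p = Suc m \<and> hd p = u \<and> last p = v \<and>
       set p \<subseteq> V \<and> (\<forall>i<m. E (p ! i) (p ! Suc i)))"

definition cycle_adj :: "nat \<Rightarrow> nat \<Rightarrow> nat \<Rightarrow> bool" where
  "cycle_adj n i j = (i < n \<and> j < n \<and> (j = (i + 1) mod n \<or> i = (j + 1) mod n))"

definition path_adj :: "nat \<Rightarrow> nat \<Rightarrow> nat \<Rightarrow> bool" where
  "path_adj k i j = (i < k \<and> j < k \<and> (j = i + 1 \<or> i = j + 1))"

definition cart_adj :: "('a \<Rightarrow> 'a \<Rightarrow> bool) \<Rightarrow> ('b \<Rightarrow> 'b \<Rightarrow> bool) \<Rightarrow> 'a \<times> 'b \<Rightarrow> 'a \<times> 'b \<Rightarrow> bool" where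
  "cart_adj EG EH x y = ((snd x = snd y \<and> EG (fst x) (fst y)) \<or> (fst x = fst y \<and> EH (snd x) (snd y)))"

definition doubly_resolving :: "'a set \<Rightarrow> ('a \<Rightarrow> 'a \<Rightarrow> bool) \<Rightarrow> 'a set \<Rightarrow> bool" where
  "doubly_resolving V E Q = (Q \<subseteq> V \<and> finite Q \<and>
     (\<forall>x\<in>V. \<forall>y\<in>V. x \<noteq> y \<longrightarrow>
        \<not> (\<exists>c::int. \<forall>q\<in>Q. int (gdist V E x q) - int (gdist V E y q) = c)))"

definition psi :: "'a set \<Rightarrow> ('a \<Rightarrow> 'a \<Rightarrow> bool) \<Rightarrow> nat" where
  "psi V E = (LEAST m. \<exists>Q. doubly_resolving V E Q \<and> card Q = m)"

end

theory Submission
  imports Defs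
begin

lemma gdist_char:
  fixes f :: "'a \<Rightarrow> nat"
  assumes vV: "v \<in> V" and uV: "u \<in> V" and fv: "f v = 0"
    and nb: "\<And>x. x \<in> V \<Longrightarrow> x \<noteq> v \<Longrightarrow> \<exists>y\<in>V. E x y \<and> f x = Suc (f y)"
    and lip: "\<And>x y. x \<in> V \<Longrightarrow> y \<in> V \<Longrightarrow> E x y \<Longrightarrow> f x \<le> Suc (f y)"
  shows "gdist V E u v = f u"
proof -
  have ex: "\<forall>x\<in>V. f x = m \<longrightarrow> (\<exists>p. length p = Suc m \<and> hd p = x \<and> last p = v \<and>
       set p \<subseteq> V \<and> (\<forall>i<m. E (p ! i) (p ! Suc i)))" for m
  proof (induction m)
    case 0
    show ?case
    proof (intro ballI impI)
      fix x assume "x \<in> V" "f x = 0"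
      then have "x = v" using nb by fastforce
      then show "\<exists>p. length p = Suc 0 \<and> hd p = x \<and> last p = v \<and> set p \<subseteq> V \<and> (\<forall>i<0. E (p ! i) (p ! Suc i))"
        using vV by (intro exI[of _ "[v]"]) auto
    qed
  next
    case (Suc m)
    show ?case
    proof (intro ballI impI)
      fix x assume xV: "x \<in> V" and fx: "f x = Suc m"
      then have "x \<noteq> v" using fv by auto
      then obtain y where yV: "y \<in> V" and exy: "E x y" and fy: "f x = Suc (f y)" using nb xV by blast
      then have "f y = m" using fx by simp
      then obtain p where p: "length p = Suc m" "hd p = y" "last p = v" "set p \<subseteq> V"
          "\<forall>i<m. E (p ! i) (p ! Suc i)" using Suc.IH yV by blast
      have pne: "p \<noteq> []" using p(1) by auto
      have "\<forall>i<Suc m. E ((x # p) ! i) ((x # p) ! Suc i)"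
      proof (intro allI impI)
        fix i assume "i < Suc m"
        then show "E ((x # p) ! i) ((x # p) ! Suc i)"
        proof (cases i)
          case 0
          then show ?thesis using exy p(2) pne by (simp add: hd_conv_nth)
        next
          case (Suc j)
          then show ?thesis using p(5) \<open>i < Suc m\<close> by simp
        qed
      qed
      then show "\<exists>q. length q = Suc (Suc m) \<and> hd q = x \<and> last q = v \<and> set q \<subseteq> V \<and> (\<forall>i<Suc m. E (q ! i) (q ! Suc i))"
        using p pne xV by (intro exI[of _ "x # p"]) auto
    qed
  qed
  have lb: "\<forall>p x. length p = Suc m \<and> hd p = x \<and> last p = v \<and> set p \<subseteq> V \<and> (\<forall>i<m. E (p ! i) (p ! Suc i)) \<longrightarrow> f x \<le> m" for m
  proof (induction m)
    case 0
    then show ?case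
    proof (intro allI impI)
      fix p x assume h: "length p = Suc 0 \<and> hd p = x \<and> last p = v \<and> set p \<subseteq> V \<and> (\<forall>i<0. E (p ! i) (p ! Suc i))"
      then obtain z where "p = [z]" by (metis length_0_conv length_Suc_conv)
      then show "f x \<le> 0" using h fv by auto
    qed
  next
    case (Suc m)
    show ?case
    proof (intro allI impI)
      fix p x assume h: "length p = Suc (Suc m) \<and> hd p = x \<and> last p = v \<and> set p \<subseteq> V \<and> (\<forall>i<Suc m. E (p ! i) (p ! Suc i))"
      then obtain z p' where pp: "p = z # p'" and lp': "length p' = Suc m" by (metis length_Suc_conv)
      have zx: "z = x" using h pp by simp
      have pne: "p' \<noteq> []" using lp' by auto
      have "E (p ! 0) (p ! Suc 0)" using h by simp
      then have e0: "E x (hd p')" using pp zx pne by (simp add: hd_conv_nth)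
      have "\<forall>i<m. E (p' ! i) (p' ! Suc i)"
      proof (intro allI impI)
        fix i assume "i < m"
        then have "E (p ! Suc i) (p ! Suc (Suc i))" using h by simp
        then show "E (p' ! i) (p' ! Suc i)" using pp by simp
      qed
      then have "f (hd p') \<le> m" using Suc.IH h pp pne by auto
      moreover have "x \<in> V" "hd p' \<in> V" using h pp pne by auto
      ultimately show "f x \<le> Suc m" using lip e0 by fastforce
    qed
  qed
  obtain p where p: "length p = Suc (f u) \<and> hd p = u \<and> last p = v \<and> set p \<subseteq> V \<and> (\<forall>i<f u. E (p ! i) (p ! Suc i))"
    using ex uV by blast
  show ?thesis unfolding gdist_def
  proof (rule Least_equality)
    show "\<exists>p. length p = Suc (f u) \<and> hd p = u \<and> last p = v \<and> set p \<subseteq> V \<and> (\<forall>i<f u. E (p ! i) (p ! Suc i))"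
      using p by blast
  next
    fix y assume "\<exists>p. length p = Suc y \<and> hd p = u \<and> last p = v \<and> set p \<subseteq> V \<and> (\<forall>i<y. E (p ! i) (p ! Suc i))"
    then show "f u \<le> y" using lb by blast
  qed
qed

definition cd :: "nat \<Rightarrow> nat \<Rightarrow> nat \<Rightarrow> nat" where
  "cd n i j = (if i \<le> j then min (j - i) (n - (j - i)) else min (i - j) (n - (i - j)))"

definition pd :: "nat \<Rightarrow> nat \<Rightarrow> nat" where
  "pd a b = (if a \<le> b then b - a else a - b)"

lemma suc_mod: "(i::nat) < n \<Longrightarrow> (i + 1) mod n = (if i + 1 < n then i + 1 else 0)"
proof -
  assume "i < n"
  then have "i + 1 < n \<or> i + 1 = n" by arith
  then show ?thesis by auto
qed

lemma pred_mod: "(i::nat) < n \<Longrightarrow> (i + n - 1) mod n = (if i = 0 then n - 1 else i - 1)"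
proof (cases "i = 0")
  case True
  assume "i < n" then have "n - 1 < n" by simp
  then show ?thesis using True by simp
next
  case False
  assume "i < n"
  then have "i + n - 1 = (i - 1) + n" using False by simp
  moreover have "(i - 1 + n) mod n = i - 1" using \<open>i < n\<close> by simp
  ultimately show ?thesis using False by simp
qed

lemma cycle_adj_cases:
  assumes "cycle_adj n i i'"
  shows "i < n \<and> i' < n \<and> ((i + 1 < n \<and> i' = i + 1) \<or> (i + 1 = n \<and> i' = 0) \<or> (i' + 1 < n \<and> i = i' + 1) \<or> (i' + 1 = n \<and> i = 0))"
proof -
  have a: "i < n" "i' < n" "i' = (i + 1) mod n \<or> i = (i' + 1) mod n" using assms unfolding cycle_adj_def by auto
  show ?thesis using a(3) unfolding suc_mod[OF a(1)] suc_mod[OF a(2)] using a(1,2)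
    by (cases "i + 1 < n"; cases "i' + 1 < n"; simp)
qed


lemma cd_int: "i < n \<Longrightarrow> j < n \<Longrightarrow> int (cd n i j) = min \<bar>int i - int j\<bar> (int n - \<bar>int i - int j\<bar>)"
  unfolding cd_def by (cases "i \<le> j") (auto simp: min_def)

lemma cd_lip:
  assumes "cycle_adj n i i'" "j < n"
  shows "cd n i j \<le> Suc (cd n i' j)"
proof -
  have c: "i < n" "i' < n" "(i + 1 < n \<and> i' = i + 1) \<or> (i + 1 = n \<and> i' = 0) \<or> (i' + 1 < n \<and> i = i' + 1) \<or> (i' + 1 = n \<and> i = 0)"
    using cycle_adj_cases[OF assms(1)] by auto
  have "int (cd n i j) \<le> int (cd n i' j) + 1"
    unfolding cd_int[OF c(1) assms(2)] cd_int[OF c(2) assms(2)] using c(3) assms(2) by (elim disjE; arith)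
  then show ?thesis by simp
qed


lemma cd_step:
  assumes "i < n" "j < n" "i \<noteq> j" "n \<ge> 3"
  shows "(cd n i j = Suc (cd n ((i + 1) mod n) j)) \<or> (cd n i j = Suc (cd n ((i + n - 1) mod n) j))"
proof -
  define i1 where "i1 = (if i + 1 < n then i + 1 else 0)"
  define i2 where "i2 = (if i = 0 then n - 1 else i - 1)"
  have l: "i1 < n" "i2 < n" using assms unfolding i1_def i2_def by auto
  have "int (cd n i j) = int (cd n i1 j) + 1 \<or> int (cd n i j) = int (cd n i2 j) + 1"
    unfolding cd_int[OF assms(1,2)] cd_int[OF l(1) assms(2)] cd_int[OF l(2) assms(2)]
    using assms unfolding i1_def i2_def by (cases "i + 1 < n"; cases "i = 0"; simp; arith)
  then show ?thesis unfolding suc_mod[OF assms(1)] pred_mod[OF assms(1)] i1_def[symmetric] i2_def[symmetric] by auto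
qed

lemma cyc_adj_suc: "(i::nat) < n \<Longrightarrow> n \<ge> 3 \<Longrightarrow> cycle_adj n i ((i + 1) mod n)"
  unfolding cycle_adj_def by auto

lemma cyc_adj_pred: "(i::nat) < n \<Longrightarrow> n \<ge> 3 \<Longrightarrow> cycle_adj n i ((i + n - 1) mod n)"
  unfolding cycle_adj_def pred_mod by (auto simp: suc_mod)

lemma cd_self[simp]: "cd n i i = 0" by (simp add: cd_def)
lemma pd_self[simp]: "pd a a = 0" by (simp add: pd_def)

lemma dist_formula:
  assumes n3: "n \<ge> 3" and uV: "u \<in> {0..<n} \<times> {0..<k}" and vV: "v \<in> {0..<n} \<times> {0..<k}"
  shows "gdist ({0..<n} \<times> {0..<k}) (cart_adj (cycle_adj n) (path_adj k)) u v
       = cd n (fst u) (fst v) + pd (snd u) (snd v)"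
proof (rule gdist_char[OF vV uV])
  show "cd n (fst v) (fst v) + pd (snd v) (snd v) = 0" by simp
next
  fix x y assume xV: "x \<in> {0..<n} \<times> {0..<k}" and yV: "y \<in> {0..<n} \<times> {0..<k}"
    and e: "cart_adj (cycle_adj n) (path_adj k) x y"
  show "cd n (fst x) (fst v) + pd (snd x) (snd v) \<le> Suc (cd n (fst y) (fst v) + pd (snd y) (snd v))"
  proof (cases "snd x = snd y \<and> cycle_adj n (fst x) (fst y)")
    case True
    have "fst v < n" using vV by auto
    then have "cd n (fst x) (fst v) \<le> Suc (cd n (fst y) (fst v))" using cd_lip True by blast
    then show ?thesis using True by simp
  next
    case False
    then have "fst x = fst y" "path_adj k (snd x) (snd y)" using e unfolding cart_adj_def by auto
    then show ?thesis unfolding path_adj_def pd_def by auto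
  qed
next
  fix x assume xV: "x \<in> {0..<n} \<times> {0..<k}" and xv: "x \<noteq> v"
  obtain i a where x: "x = (i, a)" by (cases x)
  obtain j b where v: "v = (j, b)" by (cases v)
  have i: "i < n" "a < k" using xV x by auto
  have j: "j < n" "b < k" using vV v by auto
  let ?V = "{0..<n} \<times> {0..<k}"
  let ?f = "\<lambda>x. cd n (fst x) (fst v) + pd (snd x) (snd v)"
  let ?E = "cart_adj (cycle_adj n) (path_adj k)"
  show "\<exists>y\<in>?V. ?E x y \<and> ?f x = Suc (?f y)"
  proof (cases "a = b")
    case True
    then have ij: "i \<noteq> j" using xv x v by auto
    from cd_step[OF i(1) j(1) ij n3] show ?thesis
    proof
      assume h: "cd n i j = Suc (cd n ((i + 1) mod n) j)"
      have "((i + 1) mod n, a) \<in> ?V" using i by auto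
      moreover have "?E x ((i + 1) mod n, a)" using cyc_adj_suc[OF i(1) n3] x unfolding cart_adj_def by simp
      moreover have "?f x = Suc (?f ((i + 1) mod n, a))" using h x v True by simp
      ultimately show ?thesis by blast
    next
      assume h: "cd n i j = Suc (cd n ((i + n - 1) mod n) j)"
      have "((i + n - 1) mod n, a) \<in> ?V" using i by auto
      moreover have "?E x ((i + n - 1) mod n, a)" using cyc_adj_pred[OF i(1) n3] x unfolding cart_adj_def by simp
      moreover have "?f x = Suc (?f ((i + n - 1) mod n, a))" using h x v True by simp
      ultimately show ?thesis by blast
    qed
  next
    case False
    show ?thesis
    proof (cases "a < b")
      case True
      have "(i, a + 1) \<in> ?V" using i j True by auto
      moreover have "?E x (i, a + 1)" using x i j True unfolding cart_adj_def path_adj_def by simp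
      moreover have "?f x = Suc (?f (i, a + 1))" using x v True unfolding pd_def by simp
      ultimately show ?thesis by blast
    next
      case False
      then have ba: "b < a" using \<open>a \<noteq> b\<close> by auto
      have "(i, a - 1) \<in> ?V" using i by auto
      moreover have "?E x (i, a - 1)" using x i ba unfolding cart_adj_def path_adj_def by auto
      moreover have "?f x = Suc (?f (i, a - 1))" using x v ba unfolding pd_def by auto
      ultimately show ?thesis by blast
    qed
  qed
qed

lemma pd_0[simp]: "pd a 0 = a" by (simp add: pd_def)
lemma pd_le: "a \<le> b \<Longrightarrow> pd a b = b - a" by (simp add: pd_def)

lemma cyc_res:
  assumes "n = 2 * m" "m \<ge> 2" "i < n" "i' < n" "cd n i 0 = cd n i' 0" "cd n i 1 = cd n i' 1"
  shows "i = i'"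
proof -
  have "int (cd n i 0) = int (cd n i' 0)" "int (cd n i 1) = int (cd n i' 1)" using assms(5,6) by auto
  then show ?thesis
    unfolding cd_int[OF assms(3)] cd_int[OF assms(4)] using assms(1-4)
    by (simp add: cd_int)
qed

lemma cd_anti:
  assumes "n = 2 * m" "i < n"
  shows "cd n i m + cd n i 0 = m"
proof -
  have "m < n" "0 < n" using assms by auto
  have "int (cd n i m) + int (cd n i 0) = int m"
    unfolding cd_int[OF assms(2) \<open>m < n\<close>] cd_int[OF assms(2) \<open>0 < n\<close>] using assms by arith
  then show ?thesis by simp
qed

lemma upper:
  fixes n k m :: nat
  assumes nm: "n = 2 * m" and m2: "m \<ge> 2" and k3: "k \<ge> 3"
  shows "doubly_resolving ({0..<n} \<times> {0..<k}) (cart_adj (cycle_adj n) (path_adj k))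
           {(0,0), (0,k-1), (1,0), (m,0)}"
proof -
  let ?V = "{0..<n} \<times> {0..<k}"
  let ?E = "cart_adj (cycle_adj n) (path_adj k)"
  let ?Q = "{(0::nat,0::nat), (0,k-1), (1,0), (m,0)}"
  have n3: "n \<ge> 3" using nm m2 by simp
  have QV: "?Q \<subseteq> ?V" using nm m2 k3 by auto
  have main: False if xV: "x \<in> ?V" and yV: "y \<in> ?V" and xy: "x \<noteq> y"
     and c: "\<forall>q\<in>?Q. int (gdist ?V ?E x q) - int (gdist ?V ?E y q) = c" for x y c
  proof -
    obtain i a where x: "x = (i, a)" by (cases x)
    obtain i' a' where y: "y = (i', a')" by (cases y)
    have r: "int (gdist ?V ?E x q) - int (gdist ?V ?E y q) = int (cd n i (fst q) + pd a (snd q)) - int (cd n i' (fst q) + pd a' (snd q))"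
      if "q \<in> ?Q" for q
      using dist_formula[OF n3 xV, of q] dist_formula[OF n3 yV, of q] QV that x y by auto
    have ia: "i < n" "a < k" "i' < n" "a' < k" using xV yV x y by auto
    have e1: "int (cd n i 0 + a) - int (cd n i' 0 + a') = c" using c r[of "(0,0)"] by simp
    have e2: "int (cd n i 0 + (k - 1 - a)) - int (cd n i' 0 + (k - 1 - a')) = c" using c r[of "(0,k-1)"] ia by (simp add: pd_le)
    have e3: "int (cd n i 1 + a) - int (cd n i' 1 + a') = c" using c r[of "(1,0)"] by simp
    have e4: "int (cd n i m + a) - int (cd n i' m + a') = c" using c r[of "(m,0)"] by simp
    have aa: "a = a'" using e1 e2 ia by simp
    have an1: "cd n i m + cd n i 0 = m" "cd n i' m + cd n i' 0 = m" using cd_anti nm ia by auto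
    have z0: "cd n i 0 = cd n i' 0" using e1 e4 aa an1 by simp
    have z1: "cd n i 1 = cd n i' 1" using e1 e3 aa z0 by simp
    have "i = i'" using cyc_res[OF nm m2 ia(1) ia(3) z0 z1] .
    then show False using aa x y xy by simp
  qed
  show ?thesis unfolding doubly_resolving_def using QV main by blast
qed

definition DD :: "nat \<Rightarrow> nat \<Rightarrow> nat \<Rightarrow> nat \<Rightarrow> nat \<Rightarrow> nat \<Rightarrow> nat \<Rightarrow> int" where
  "DD n i a i' a' j b = int (cd n i j + pd a b) - int (cd n i' j + pd a' b)"

definition wit :: "nat \<Rightarrow> nat \<Rightarrow> nat \<Rightarrow> nat \<Rightarrow> nat \<Rightarrow> nat \<Rightarrow> bool" where
  "wit n k c1 c2 c3 b = (\<exists>i a i' a'. i < n \<and> a < k \<and> i' < n \<and> a' < k \<and> (i, a) \<noteq> (i', a') \<and>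
      DD n i a i' a' c1 0 = DD n i a i' a' c2 (k - 1) \<and> DD n i a i' a' c3 b = DD n i a i' a' c1 0)"

lemma witI:
  assumes "i < n" "a < k" "i' < n" "a' < k" "(i, a) \<noteq> (i', a')"
    "DD n i a i' a' c1 0 = DD n i a i' a' c2 (k - 1)" "DD n i a i' a' c3 b = DD n i a i' a' c1 0"
  shows "wit n k c1 c2 c3 b"
  using assms unfolding wit_def by blast

lemma pd_int: "int (pd a b) = \<bar>int a - int b\<bar>"
  unfolding pd_def by auto

lemma DD_int:
  assumes "i < n" "i' < n" "j < n"
  shows "DD n i a i' a' j b = (min \<bar>int i - int j\<bar> (int n - \<bar>int i - int j\<bar>) + \<bar>int a - int b\<bar>)
     - (min \<bar>int i' - int j\<bar> (int n - \<bar>int i' - int j\<bar>) + \<bar>int a' - int b\<bar>)"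
  unfolding DD_def using cd_int[OF assms(1,3)] cd_int[OF assms(2,3)] pd_int[of a b] pd_int[of a' b] by simp

lemma cd_f: "x \<le> y \<Longrightarrow> 2 * y \<le> n + 2 * x \<Longrightarrow> cd n x y = y - x"
  unfolding cd_def by auto
lemma cd_b: "y \<le> x \<Longrightarrow> 2 * x \<le> n + 2 * y \<Longrightarrow> cd n x y = x - y"
  unfolding cd_def by auto
lemma cd_fw: "x \<le> y \<Longrightarrow> n + 2 * x \<le> 2 * y \<Longrightarrow> cd n x y = n + x - y"
  unfolding cd_def by auto
lemma cd_bw: "y \<le> x \<Longrightarrow> n + 2 * y \<le> 2 * x \<Longrightarrow> cd n x y = n + y - x"
  unfolding cd_def by auto
lemma pd_f: "a \<le> b \<Longrightarrow> pd a b = b - a" unfolding pd_def by auto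
lemma pd_b: "b \<le> a \<Longrightarrow> pd a b = a - b" unfolding pd_def by auto

lemma core0_t0:
  assumes nm: "n = 2 * m" and m2: "m \<ge> 2" and k3: "k \<ge> 3" and c: "c < n" and b: "b < k"
  shows "wit n k 0 0 c b"
proof -
  consider "c = 0 \<or> c = m" | "0 < c \<and> c < m" | "m < c" by linarith
  then show ?thesis
  proof cases
    case 1
    show ?thesis apply (rule witI[of 1 n 0 k "n - 1" 0]) using nm m2 k3 c b 1 by (auto simp: DD_int)
  next
    case 2
    show ?thesis apply (rule witI[of 0 n 0 k "n - 1" 0]) using nm m2 k3 c b 2 by (auto simp: DD_int)
  next
    case 3
    show ?thesis apply (rule witI[of 0 n 0 k 1 0]) using nm m2 k3 c b 3 by (auto simp: DD_int)
  qed
qed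

lemma core0:
  assumes nm: "n = 2 * m" and m2: "m \<ge> 2" and k3: "k \<ge> 3" and t: "t \<le> m" and c: "c < n" and b: "b < k"
  shows "wit n k 0 t c b"
proof (cases "t = 0")
  case True
  then show ?thesis using core0_t0[OF nm m2 k3 c b] by simp
next
  case False
  then obtain s where ts: "t = Suc s" by (cases t) auto
  obtain K where kK: "k = K + 3" using k3 by (metis add.commute le_iff_add)
  obtain p where mp: "m = p + 2" using m2 by (metis add.commute le_iff_add)
  have np: "n = 2 * p + 4" using nm mp by simp
  note H = np mp kK ts t c b
  show ?thesis
  proof (cases "t \<le> c \<and> c + 1 \<le> t + m")
    case True
    note I = this
    show ?thesis
    proof (cases "1 \<le> b")
      case True
      show ?thesis apply (rule witI[of t n 0 k s 1]) using H I True
        by (simp_all add: DD_def cd_f cd_b cd_fw cd_bw pd_f pd_b)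
    next
      case False
      then have b0: "b = 0" by simp
      consider "c + 1 \<le> m" | "c = m \<and> t < m" | "c = m \<and> t = m" | "m + 1 \<le> c" using t by linarith
      then show ?thesis
      proof cases
        case 1
        show ?thesis apply (rule witI[of 0 n 0 k "2 * p + 3" 0]) using H I b0 1
          by (simp_all add: DD_def cd_f cd_b cd_fw cd_bw pd_f pd_b)
      next
        case 2
        show ?thesis apply (rule witI[of 1 n 0 k "2 * p + 3" 1]) using H I b0 2
          by (simp_all add: DD_def cd_f cd_b cd_fw cd_bw pd_f pd_b)
      next
        case 3
        show ?thesis apply (rule witI[of 1 n 0 k "2 * p + 3" 0]) using H I b0 3
          by (simp_all add: DD_def cd_f cd_b cd_fw cd_bw pd_f pd_b)
      next
        case 4
        then obtain r where cr: "c = Suc r" by (cases c) auto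
        show ?thesis apply (rule witI[of r n 0 k c 1]) using H I b0 4 cr
          by (simp_all add: DD_def cd_f cd_b cd_fw cd_bw pd_f pd_b)
      qed
    qed
  next
    case False
    note O = this
    show ?thesis
    proof (cases "b + 2 \<le> k")
      case True
      have "c < t \<or> t + m \<le> c" using O by linarith
      then show ?thesis
      proof
        assume c1: "c < t"
        show ?thesis apply (rule witI[of t n "K + 1" k s "K + 2"]) using H True c1
          by (simp_all add: DD_def cd_f cd_b cd_fw cd_bw pd_f pd_b)
      next
        assume c1: "t + m \<le> c"
        show ?thesis apply (rule witI[of t n "K + 1" k s "K + 2"]) using H True c1
          by (simp_all add: DD_def cd_f cd_b cd_fw cd_bw pd_f pd_b)
      qed
    next
      case False
      then have bk: "b = K + 2" using b kK by simp
      consider "c = 0 \<and> t < m" | "c = 0 \<and> t = m" | "1 \<le> c \<and> c < t" | "c = t + m" | "t + m < c"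
        using O t by linarith
      then show ?thesis
      proof cases
        case 1
        show ?thesis apply (rule witI[of 0 n 0 k "2 * p + 3" 0]) using H O bk 1
          by (simp_all add: DD_def cd_f cd_b cd_fw cd_bw pd_f pd_b)
      next
        case 2
        show ?thesis apply (rule witI[of 1 n 0 k "2 * p + 3" 0]) using H O bk 2
          by (simp_all add: DD_def cd_f cd_b cd_fw cd_bw pd_f pd_b)
      next
        case 3
        then obtain r where cr: "c = Suc r" by (cases c) auto
        show ?thesis apply (rule witI[of c n 0 k r 1]) using H O bk 3 cr
          by (simp_all add: DD_def cd_f cd_b cd_fw cd_bw pd_f pd_b)
      next
        case 4
        show ?thesis apply (rule witI[of s n "K + 2" k "t + 1" "K + 1"]) using H O bk 4
          by (simp_all add: DD_def cd_f cd_b cd_fw cd_bw pd_f pd_b)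
      next
        case 5
        then obtain r where cr: "c = Suc r" by (cases c) auto
        show ?thesis apply (rule witI[of c n 0 k r 0]) using H O bk 5 cr
          by (simp_all add: DD_def cd_f cd_b cd_fw cd_bw pd_f pd_b)
      qed
    qed
  qed
qed

lemma wit_transfer:
  assumes iso: "\<And>i j. i < n \<Longrightarrow> j < n \<Longrightarrow> cd n (\<phi> i) (\<phi> j) = cd n i j"
    and inv: "\<And>i. i < n \<Longrightarrow> \<psi> i < n \<and> \<phi> (\<psi> i) = i"
    and cs: "c1 < n" "c2 < n" "c3 < n"
    and w: "wit n k (\<phi> c1) (\<phi> c2) (\<phi> c3) b"
  shows "wit n k c1 c2 c3 b"
proof -
  obtain i a i' a' where h: "i < n" "a < k" "i' < n" "a' < k" "(i, a) \<noteq> (i', a')"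
    "DD n i a i' a' (\<phi> c1) 0 = DD n i a i' a' (\<phi> c2) (k - 1)"
    "DD n i a i' a' (\<phi> c3) b = DD n i a i' a' (\<phi> c1) 0"
    using w unfolding wit_def by blast
  have tr: "DD n (\<psi> i) a (\<psi> i') a' c bb = DD n i a i' a' (\<phi> c) bb" if "c < n" for c bb
  proof -
    have "cd n (\<psi> i) c = cd n i (\<phi> c)" using iso[of "\<psi> i" c] inv[OF h(1)] that by simp
    moreover have "cd n (\<psi> i') c = cd n i' (\<phi> c)" using iso[of "\<psi> i'" c] inv[OF h(3)] that by simp
    ultimately show ?thesis unfolding DD_def by simp
  qed
  have d: "(\<psi> i, a) \<noteq> (\<psi> i', a')"
  proof
    assume "(\<psi> i, a) = (\<psi> i', a')"
    then have "\<phi> (\<psi> i) = \<phi> (\<psi> i')" "a = a'" by auto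
    then show False using inv[OF h(1)] inv[OF h(3)] h(5) by simp
  qed
  show ?thesis
    apply (rule witI[of "\<psi> i" n a k "\<psi> i'" a'])
    using h inv[OF h(1)] inv[OF h(3)] d tr cs by auto
qed

lemma mod_rot: "(i::nat) < n \<Longrightarrow> r < n \<Longrightarrow> (i + r) mod n = (if i + r < n then i + r else i + r - n)"
  by (auto simp: not_less le_mod_geq)

lemma cd_rot:
  assumes "i < n" "j < n"
  shows "cd n ((i + r) mod n) ((j + r) mod n) = cd n i j"
proof -
  have n0: "0 < n" using assms by simp
  have e1: "(i + r) mod n = (i + r mod n) mod n" by (simp add: mod_add_right_eq)
  have e2: "(j + r) mod n = (j + r mod n) mod n" by (simp add: mod_add_right_eq)
  define r' where "r' = r mod n"
  have r': "r' < n" using n0 unfolding r'_def by simp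
  define i1 where "i1 = (i + r') mod n"
  define j1 where "j1 = (j + r') mod n"
  have l: "i1 < n" "j1 < n" using n0 unfolding i1_def j1_def by auto
  have v: "i1 = (if i + r' < n then i + r' else i + r' - n)" "j1 = (if j + r' < n then j + r' else j + r' - n)"
    unfolding i1_def j1_def using mod_rot[OF assms(1) r'] mod_rot[OF assms(2) r'] by auto
  have "int (cd n i1 j1) = int (cd n i j)"
    unfolding cd_int[OF l] cd_int[OF assms]
    using assms r' v by (cases "i + r' < n"; cases "j + r' < n"; simp; arith)
  then show ?thesis using e1 e2 unfolding i1_def j1_def r'_def by simp
qed

lemma cd_refl:
  assumes "i < n" "j < n"
  shows "cd n ((n - i) mod n) ((n - j) mod n) = cd n i j"
proof -
  have a: "(n - i) mod n = (if i = 0 then 0 else n - i)" "(n - j) mod n = (if j = 0 then 0 else n - j)"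
    using assms by auto
  show ?thesis unfolding a using assms by (cases "i = 0"; cases "j = 0"; simp add: cd_def min_def)
qed

lemma core:
  assumes nm: "n = 2 * m" and m2: "m \<ge> 2" and k3: "k \<ge> 3"
    and cs: "c1 < n" "c2 < n" "c3 < n" and b: "b < k"
  shows "wit n k c1 c2 c3 b"
proof -
  have n0: "0 < n" using nm m2 by simp
  define \<phi> where "\<phi> = (\<lambda>j. (j + (n - c1)) mod n)"
  define \<psi> where "\<psi> = (\<lambda>j. (j + c1) mod n)"
  have iso: "\<And>i j. i < n \<Longrightarrow> j < n \<Longrightarrow> cd n (\<phi> i) (\<phi> j) = cd n i j"
    unfolding \<phi>_def using cd_rot by blast
  have inv: "\<psi> i < n \<and> \<phi> (\<psi> i) = i" if "i < n" for i
  proof -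
    have "\<phi> (\<psi> i) = (i + c1 + (n - c1)) mod n" unfolding \<phi>_def \<psi>_def by (simp add: mod_add_left_eq)
    also have "\<dots> = (i + n) mod n" using cs by simp
    also have "\<dots> = i" using that by simp
    finally show ?thesis unfolding \<psi>_def using n0 by simp
  qed
  have p1: "\<phi> c1 = 0" unfolding \<phi>_def using cs by simp
  have pl: "\<phi> j < n" for j unfolding \<phi>_def using n0 by simp
  define t where "t = \<phi> c2"
  define c where "c = \<phi> c3"
  have tc: "t < n" "c < n" unfolding t_def c_def using pl by auto
  have "wit n k 0 t c b"
  proof (cases "t \<le> m")
    case True
    then show ?thesis using core0[OF nm m2 k3 True tc(2) b] by simp
  next
    case False
    define \<rho> where "\<rho> = (\<lambda>j. (n - j) mod n)"
    have iso2: "\<And>i j. i < n \<Longrightarrow> j < n \<Longrightarrow> cd n (\<rho> i) (\<rho> j) = cd n i j"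
      unfolding \<rho>_def using cd_refl by blast
    have inv2: "\<rho> i < n \<and> \<rho> (\<rho> i) = i" if "i < n" for i
      unfolding \<rho>_def using that n0 by (cases "i = 0") auto
    have r0: "\<rho> 0 = 0" unfolding \<rho>_def by simp
    have rt: "\<rho> t = n - t" "n - t \<le> m" unfolding \<rho>_def using False tc nm by auto
    have "\<rho> c < n" using inv2 tc by blast
    then have "wit n k 0 (n - t) (\<rho> c) b" using core0[OF nm m2 k3 rt(2) _ b] by blast
    then have "wit n k (\<rho> 0) (\<rho> t) (\<rho> c) b" using r0 rt by simp
    then show ?thesis using wit_transfer[OF iso2 inv2 _ tc, of 0] n0 by blast
  qed
  then have "wit n k (\<phi> c1) (\<phi> c2) (\<phi> c3) b" using p1 unfolding t_def c_def by simp
  then show ?thesis using wit_transfer[OF iso inv cs] by blast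
qed

lemma lower:
  fixes n k m :: nat
  assumes nm: "n = 2 * m" and m2: "m \<ge> 2" and k3: "k \<ge> 3"
    and dr: "doubly_resolving ({0..<n} \<times> {0..<k}) (cart_adj (cycle_adj n) (path_adj k)) Q"
  shows "4 \<le> card Q"
proof (rule ccontr)
  let ?V = "{0..<n} \<times> {0..<k}"
  let ?E = "cart_adj (cycle_adj n) (path_adj k)"
  assume "\<not> 4 \<le> card Q"
  then have cQ: "card Q \<le> 3" by simp
  have QV: "Q \<subseteq> ?V" and fQ: "finite Q" using dr unfolding doubly_resolving_def by auto
  have n3: "n \<ge> 3" using nm m2 by simp
  have nr: "\<not> (\<exists>c::int. \<forall>q\<in>Q. int (gdist ?V ?E x q) - int (gdist ?V ?E y q) = c)"
    if "x \<in> ?V" "y \<in> ?V" "x \<noteq> y" for x y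
    using dr that unfolding doubly_resolving_def by blast
  have gd: "int (gdist ?V ?E (i, a) q) - int (gdist ?V ?E (i', a') q) = DD n i a i' a' (fst q) (snd q)"
    if "q \<in> Q" "i < n" "a < k" "i' < n" "a' < k" for q i a i' a'
    using dist_formula[OF n3, of "(i, a)" k q] dist_formula[OF n3, of "(i', a')" k q] that QV
    unfolding DD_def by auto
  obtain K where kK: "k = K + 3" using k3 by (metis add.commute le_iff_add)
  show False
  proof (cases "\<exists>q\<in>Q. snd q = 0")
    case False
    have "\<forall>q\<in>Q. int (gdist ?V ?E (0, 0) q) - int (gdist ?V ?E (0, 1) q) = 1"
    proof
      fix q assume q: "q \<in> Q"
      then have "snd q \<ge> 1" using False by (cases "snd q") auto
      then show "int (gdist ?V ?E (0, 0) q) - int (gdist ?V ?E (0, 1) q) = 1"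
        using gd[OF q, of 0 0 0 1] n3 k3 unfolding DD_def by (simp add: pd_f)
    qed
    then show False using nr[of "(0,0)" "(0,1)"] n3 k3 by auto
  next
    case True
    then obtain c1 where q1: "(c1, 0) \<in> Q" by auto
    show False
    proof (cases "\<exists>q\<in>Q. snd q = K + 2")
      case False
      have "\<forall>q\<in>Q. int (gdist ?V ?E (0, K + 2) q) - int (gdist ?V ?E (0, K + 1) q) = 1"
      proof
        fix q assume q: "q \<in> Q"
        then have "snd q \<le> K + 1" using False QV kK by fastforce
        then show "int (gdist ?V ?E (0, K + 2) q) - int (gdist ?V ?E (0, K + 1) q) = 1"
          using gd[OF q, of 0 "K + 2" 0 "K + 1"] n3 kK unfolding DD_def by (simp add: pd_b)
      qed
      then show False using nr[of "(0, K + 2)" "(0, K + 1)"] n3 kK by auto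
    next
      case True
      then obtain c2 where q2: "(c2, K + 2) \<in> Q" by auto
      have ne: "(c1, 0) \<noteq> (c2, K + 2)" by simp
      have "card (Q - {(c1, 0), (c2, K + 2)}) = card Q - 2"
        using q1 q2 ne fQ by (simp add: card_Diff_subset)
      then have "card (Q - {(c1, 0), (c2, K + 2)}) \<le> 1" using cQ by simp
      then obtain q3 where q3: "q3 \<in> ?V" "Q \<subseteq> {(c1, 0), (c2, K + 2), q3}"
      proof (cases "Q - {(c1, 0), (c2, K + 2)} = {}")
        case True
        then show ?thesis using that[of "(c1, 0)"] q1 QV by blast
      next
        case False
        assume c1': "card (Q - {(c1, 0), (c2, K + 2)}) \<le> 1"
        obtain z where z: "z \<in> Q - {(c1, 0), (c2, K + 2)}" using False by blast
        have fin: "finite (Q - {(c1, 0), (c2, K + 2)})" using fQ by simp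
        have "Q - {(c1, 0), (c2, K + 2)} = {z}"
        proof (rule ccontr)
          assume "Q - {(c1, 0), (c2, K + 2)} \<noteq> {z}"
          then obtain w where w: "w \<in> Q - {(c1, 0), (c2, K + 2)}" "w \<noteq> z" using z by blast
          have "{z, w} \<subseteq> Q - {(c1, 0), (c2, K + 2)}" using z w by blast
          then have "card {z, w} \<le> card (Q - {(c1, 0), (c2, K + 2)})" by (rule card_mono[OF fin])
          then show False using w(2) c1' by simp
        qed
        then show ?thesis using that[of z] z QV by blast
      qed
      obtain c3 b3 where q3e: "q3 = (c3, b3)" by (cases q3)
      have cs: "c1 < n" "c2 < n" "c3 < n" "b3 < k" using q1 q2 q3 q3e QV by auto
      have "wit n k c1 c2 c3 b3" using core[OF nm m2 k3 cs] .
      then obtain i a i' a' where h: "i < n" "a < k" "i' < n" "a' < k" "(i, a) \<noteq> (i', a')"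
        "DD n i a i' a' c1 0 = DD n i a i' a' c2 (k - 1)"
        "DD n i a i' a' c3 b3 = DD n i a i' a' c1 0"
        unfolding wit_def by blast
      have "\<forall>q\<in>Q. int (gdist ?V ?E (i, a) q) - int (gdist ?V ?E (i', a') q) = DD n i a i' a' c1 0"
      proof
        fix q assume q: "q \<in> Q"
        then have "q = (c1, 0) \<or> q = (c2, K + 2) \<or> q = (c3, b3)" using q3 q3e by blast
        then show "int (gdist ?V ?E (i, a) q) - int (gdist ?V ?E (i', a') q) = DD n i a i' a' c1 0"
          using gd[OF q h(1-4)] h(6,7) kK by auto
      qed
      then show False using nr[of "(i, a)" "(i', a')"] h by auto
    qed
  qed
qed

theorem lemma3p2:
  fixes n k :: nat
  assumes "even n" and "n \<ge> 4" and "k \<ge> 3"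
  shows "psi ({0..<n} \<times> {0..<k}) (cart_adj (cycle_adj n) (path_adj k)) = 4"
proof -
  obtain m where nm: "n = 2 * m" using assms(1) by blast
  have m2: "m \<ge> 2" using nm assms(2) by simp
  let ?Q = "{(0::nat, 0::nat), (0, k - 1), (1, 0), (m, 0)}"
  have up: "doubly_resolving ({0..<n} \<times> {0..<k}) (cart_adj (cycle_adj n) (path_adj k)) ?Q"
    using upper[OF nm m2 assms(3)] .
  have c4: "card ?Q = 4" using m2 assms(3) by auto
  show ?thesis unfolding psi_def
  proof (rule Least_equality)
    show "\<exists>Q. doubly_resolving ({0..<n} \<times> {0..<k}) (cart_adj (cycle_adj n) (path_adj k)) Q \<and> card Q = 4"
      using up c4 by blast
  next
    fix y assume "\<exists>Q. doubly_resolving ({0..<n} \<times> {0..<k}) (cart_adj (cycle_adj n) (path_adj k)) Q \<and> card Q = y"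
    then show "4 \<le> y" using lower[OF nm m2 assms(3)] by blast
  qed
qed

end
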